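(* Let $\oplus$ be a combinator whose domain is contained in $V(W)$. Then: (1) $\oplus$ satisfies ($\oplus$SPU+) [for all $x,y,z$: if $x \prec_1 y$ and $z \prec_2 y$ then $x \prec_{1\oplus 2} y$ or $z \prec_{1\oplus 2} y$] if and only if it satisfies ($\oplus$SPU) [for all $x,y$: if $x \prec_1 y$ and $x \prec_2 y$ then $x \prec_{1\oplus 2} y$]; (2) $\oplus$ satisfies ($\oplus$WPU+) [for all $x,y,z$: if $x \preceq_1 y$ and $z \preceq_2 y$ then $x \preceq_{1\oplus 2} y$ or $z \preceq_{1\oplus 2} y$] if and only if it satisfies ($\oplus$WPU) [for all $x,y$: if $x \preceq_1 y$ and $x \preceq_2 y$ then $x \preceq_{1\oplus 2} y$]. (All conditions are required for every pair $\langle\preceq_1,\preceq_2\rangle$ in the domain of $\oplus$.)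
   Context: $W$ is a finite nonempty set (of possible worlds). A tpo is a total preorder on $W$; $\prec$ is its strict part. Two tpos $\preceq_1, \preceq_2$ are $S$-variants ($S \subseteq W$) if $x \preceq_1 y \iff x \preceq_2 y$ for all $(x,y) \in (S\times S) \cup (S^c \times S^c)$; $V(W)$ is the set of pairs $\langle\preceq_1,\preceq_2\rangle$ of tpos that are $S$-variants for some $S \subseteq W$. A combinator $\oplus$ maps pairs of tpos in its domain to a tpo $\preceq_{1\oplus 2}$, with strict part $\prec_{1\oplus 2}$. *)

theory Defs
  imports Main
begin

definition tpo :: "'w set \<Rightarrow> 'w rel \<Rightarrow> bool" where
  "tpo W r \<longleftrightarrow> r \<subseteq> W \<times> W
     \<and> (\<forall>x\<in>W. (x, x) \<in> r)
     \<and> (\<forall>x\<in>W. \<forall>y\<in>W. \<forall>z\<in>W. (x, y) \<in> r \<longrightarrow> (y, z) \<in> r \<longrightarrow> (x, z) \<in> r)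
     \<and> (\<forall>x\<in>W. \<forall>y\<in>W. (x, y) \<in> r \<or> (y, x) \<in> r)"

definition strict :: "'w rel \<Rightarrow> 'w rel" where
  "strict r = {(x, y). (x, y) \<in> r \<and> (y, x) \<notin> r}"

definition S_variants :: "'w set \<Rightarrow> 'w set \<Rightarrow> 'w rel \<Rightarrow> 'w rel \<Rightarrow> bool" where
  "S_variants W S r1 r2 \<longleftrightarrow>
     (\<forall>x\<in>W. \<forall>y\<in>W. ((x \<in> S \<and> y \<in> S) \<or> (x \<in> W - S \<and> y \<in> W - S))
        \<longrightarrow> ((x, y) \<in> r1 \<longleftrightarrow> (x, y) \<in> r2))"

definition V :: "'w set \<Rightarrow> ('w rel \<times> 'w rel) set" where
  "V W = {(r1, r2). tpo W r1 \<and> tpo W r2 \<and> (\<exists>S. S \<subseteq> W \<and> S_variants W S r1 r2)}"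

definition combinator :: "'w set \<Rightarrow> ('w rel \<times> 'w rel) set \<Rightarrow> ('w rel \<Rightarrow> 'w rel \<Rightarrow> 'w rel) \<Rightarrow> bool" where
  "combinator W D c \<longleftrightarrow> (\<forall>(r1, r2)\<in>D. tpo W r1 \<and> tpo W r2 \<and> tpo W (c r1 r2))"

definition SPU :: "'w set \<Rightarrow> ('w rel \<times> 'w rel) set \<Rightarrow> ('w rel \<Rightarrow> 'w rel \<Rightarrow> 'w rel) \<Rightarrow> bool" where
  "SPU W D c \<longleftrightarrow> (\<forall>(r1, r2)\<in>D. \<forall>x\<in>W. \<forall>y\<in>W.
     (x, y) \<in> strict r1 \<longrightarrow> (x, y) \<in> strict r2 \<longrightarrow> (x, y) \<in> strict (c r1 r2))"

definition SPU_plus :: "'w set \<Rightarrow> ('w rel \<times> 'w rel) set \<Rightarrow> ('w rel \<Rightarrow> 'w rel \<Rightarrow> 'w rel) \<Rightarrow> bool" where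
  "SPU_plus W D c \<longleftrightarrow> (\<forall>(r1, r2)\<in>D. \<forall>x\<in>W. \<forall>y\<in>W. \<forall>z\<in>W.
     (x, y) \<in> strict r1 \<longrightarrow> (z, y) \<in> strict r2 \<longrightarrow>
     (x, y) \<in> strict (c r1 r2) \<or> (z, y) \<in> strict (c r1 r2))"

definition WPU :: "'w set \<Rightarrow> ('w rel \<times> 'w rel) set \<Rightarrow> ('w rel \<Rightarrow> 'w rel \<Rightarrow> 'w rel) \<Rightarrow> bool" where
  "WPU W D c \<longleftrightarrow> (\<forall>(r1, r2)\<in>D. \<forall>x\<in>W. \<forall>y\<in>W.
     (x, y) \<in> r1 \<longrightarrow> (x, y) \<in> r2 \<longrightarrow> (x, y) \<in> c r1 r2)"

definition WPU_plus :: "'w set \<Rightarrow> ('w rel \<times> 'w rel) set \<Rightarrow> ('w rel \<Rightarrow> 'w rel \<Rightarrow> 'w rel) \<Rightarrow> bool" where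
  "WPU_plus W D c \<longleftrightarrow> (\<forall>(r1, r2)\<in>D. \<forall>x\<in>W. \<forall>y\<in>W. \<forall>z\<in>W.
     (x, y) \<in> r1 \<longrightarrow> (z, y) \<in> r2 \<longrightarrow>
     (x, y) \<in> c r1 r2 \<or> (z, y) \<in> c r1 r2)"

end

theory Submission
  imports Defs
begin

lemma key_weak:
  assumes t1: "tpo W r1" and t2: "tpo W r2" and sv: "S_variants W S r1 r2"
    and W: "x \<in> W" "y \<in> W" "z \<in> W"
    and h1: "(x,y) \<in> r1" and h2: "(z,y) \<in> r2"
  shows "((x,y) \<in> r1 \<and> (x,y) \<in> r2) \<or> ((z,y) \<in> r1 \<and> (z,y) \<in> r2)"
proof -
  have ag: "\<And>a b. a \<in> W \<Longrightarrow> b \<in> W \<Longrightarrow> (a \<in> S \<longleftrightarrow> b \<in> S) \<Longrightarrow> ((a,b) \<in> r1 \<longleftrightarrow> (a,b) \<in> r2)"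
    using sv unfolding S_variants_def by blast
  have tr1: "\<And>a b d. a \<in> W \<Longrightarrow> b \<in> W \<Longrightarrow> d \<in> W \<Longrightarrow> (a,b) \<in> r1 \<Longrightarrow> (b,d) \<in> r1 \<Longrightarrow> (a,d) \<in> r1"
    using t1 unfolding tpo_def by blast
  have tr2: "\<And>a b d. a \<in> W \<Longrightarrow> b \<in> W \<Longrightarrow> d \<in> W \<Longrightarrow> (a,b) \<in> r2 \<Longrightarrow> (b,d) \<in> r2 \<Longrightarrow> (a,d) \<in> r2"
    using t2 unfolding tpo_def by blast
  have to1: "\<And>a b. a \<in> W \<Longrightarrow> b \<in> W \<Longrightarrow> (a,b) \<in> r1 \<or> (b,a) \<in> r1"
    using t1 unfolding tpo_def by blast
  show ?thesis
  proof (cases "x \<in> S \<longleftrightarrow> y \<in> S")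
    case True then show ?thesis using ag W h1 by blast
  next
    case F1: False
    show ?thesis
    proof (cases "z \<in> S \<longleftrightarrow> y \<in> S")
      case True then show ?thesis using ag W h2 by blast
    next
      case False
      hence xz: "x \<in> S \<longleftrightarrow> z \<in> S" using F1 by blast
      show ?thesis
      proof (cases "(x,z) \<in> r1")
        case True
        hence "(x,z) \<in> r2" using ag W xz by blast
        then show ?thesis using tr2 W h1 h2 by blast
      next
        case False
        hence "(z,x) \<in> r1" using to1 W by blast
        then show ?thesis using tr1 W h1 h2 by blast
      qed
    qed
  qed
qed

lemma key_strict:
  assumes t1: "tpo W r1" and t2: "tpo W r2" and sv: "S_variants W S r1 r2"
    and W: "x \<in> W" "y \<in> W" "z \<in> W"
    and h1: "(x,y) \<in> strict r1" and h2: "(z,y) \<in> strict r2"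
  shows "((x,y) \<in> strict r1 \<and> (x,y) \<in> strict r2) \<or> ((z,y) \<in> strict r1 \<and> (z,y) \<in> strict r2)"
proof -
  have ag: "\<And>a b. a \<in> W \<Longrightarrow> b \<in> W \<Longrightarrow> (a \<in> S \<longleftrightarrow> b \<in> S) \<Longrightarrow> ((a,b) \<in> r1 \<longleftrightarrow> (a,b) \<in> r2)"
    using sv unfolding S_variants_def by blast
  have tr1: "\<And>a b d. a \<in> W \<Longrightarrow> b \<in> W \<Longrightarrow> d \<in> W \<Longrightarrow> (a,b) \<in> r1 \<Longrightarrow> (b,d) \<in> r1 \<Longrightarrow> (a,d) \<in> r1"
    using t1 unfolding tpo_def by blast
  have tr2: "\<And>a b d. a \<in> W \<Longrightarrow> b \<in> W \<Longrightarrow> d \<in> W \<Longrightarrow> (a,b) \<in> r2 \<Longrightarrow> (b,d) \<in> r2 \<Longrightarrow> (a,d) \<in> r2"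
    using t2 unfolding tpo_def by blast
  have to1: "\<And>a b. a \<in> W \<Longrightarrow> b \<in> W \<Longrightarrow> (a,b) \<in> r1 \<or> (b,a) \<in> r1"
    using t1 unfolding tpo_def by blast
  show ?thesis
  proof (cases "x \<in> S \<longleftrightarrow> y \<in> S")
    case True then show ?thesis using ag[of x y] ag[of y x] W h1 unfolding strict_def by blast
  next
    case F1: False
    show ?thesis
    proof (cases "z \<in> S \<longleftrightarrow> y \<in> S")
      case True then show ?thesis using ag[of z y] ag[of y z] W h2 unfolding strict_def by blast
    next
      case False
      hence xz: "x \<in> S \<longleftrightarrow> z \<in> S" using F1 by blast
      show ?thesis
      proof (cases "(x,z) \<in> r1")
        case True
        hence xz2: "(x,z) \<in> r2" using ag W xz by blast
        have "(x,y) \<in> strict r2" using tr2[OF W(1) W(3) W(2) xz2] tr2[of y x z] W xz2 h2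
          unfolding strict_def by blast
        then show ?thesis using h1 by blast
      next
        case False
        hence zx: "(z,x) \<in> r1" using to1 W by blast
        have "(z,y) \<in> strict r1" using tr1[OF W(3) W(1) W(2) zx] tr1[of y z x] W zx h1
          unfolding strict_def by blast
        then show ?thesis using h2 by blast
      qed
    qed
  qed
qed

theorem proposition6:
  fixes W :: "'w set" and D :: "('w rel \<times> 'w rel) set"
    and c :: "'w rel \<Rightarrow> 'w rel \<Rightarrow> 'w rel"
  assumes "finite W" and "W \<noteq> {}"
    and "combinator W D c"
    and "D \<subseteq> V W"
  shows "(SPU_plus W D c \<longleftrightarrow> SPU W D c) \<and> (WPU_plus W D c \<longleftrightarrow> WPU W D c)"
proof (intro conjI iffI)
  assume "SPU_plus W D c" then show "SPU W D c"
    unfolding SPU_plus_def SPU_def by fast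
next
  assume A: "SPU W D c"
  show "SPU_plus W D c" unfolding SPU_plus_def
  proof (clarify)
    fix r1 r2 x y z assume d: "(r1,r2) \<in> D" and W: "x \<in> W" "y \<in> W" "z \<in> W"
      and h: "(x,y) \<in> strict r1" "(z,y) \<in> strict r2" "(z,y) \<notin> strict (c r1 r2)"
    from d assms(4) obtain S where "tpo W r1" "tpo W r2" "S_variants W S r1 r2"
      unfolding V_def by blast
    from key_strict[OF this W h(1,2)] A d W h(3) show "(x,y) \<in> strict (c r1 r2)"
      unfolding SPU_def by blast
  qed
next
  assume "WPU_plus W D c" then show "WPU W D c"
    unfolding WPU_plus_def WPU_def by fast
next
  assume A: "WPU W D c"
  show "WPU_plus W D c" unfolding WPU_plus_def
  proof (clarify)
    fix r1 r2 x y z assume d: "(r1,r2) \<in> D" and W: "x \<in> W" "y \<in> W" "z \<in> W"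
      and h: "(x,y) \<in> r1" "(z,y) \<in> r2" "(z,y) \<notin> c r1 r2"
    from d assms(4) obtain S where "tpo W r1" "tpo W r2" "S_variants W S r1 r2"
      unfolding V_def by blast
    from key_weak[OF this W h(1,2)] A d W h(3) show "(x,y) \<in> c r1 r2"
      unfolding WPU_def by blast
  qed
qed

end
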